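(* Let $A:\mathbb{R}^n\to\mathbb{R}^m$ be a bounded linear operator, let $u^\dagger\in\mathbb{R}^n$, $v:=Au^\dagger$, let $\wp>0$ and assume $\|u^\dagger-u_0\|\le\wp$ where $u_0=\Psi(v)$. Let $\{u_k\}_{k\ge0}$ be the iterates of the IRMGL+$\Psi$ iteration with exact data described in the context, and assume $$C_0:=\eta-\nu_0(\wp+\nu_1)-\eta_0\eta_1>0.$$ Then $\|u_k-u^\dagger\|\le\wp$ for all $k\ge0$, $$\|u_{k+1}-u^\dagger\|^2-\|u_k-u^\dagger\|^2\le-2C_0\|Au_k-v\|^2\quad\text{for all }k\ge0,$$ the sequence $\{\|u_k-u^\dagger\|\}_{k\ge0}$ is monotonically decreasing, and $$\sum_{k=0}^\infty\|Au_k-v\|^2\le\frac{1}{2C_0}\|u_0-u^\dagger\|^2<\infty;$$ in particular $\|Au_k-v\|\to0$ as $k\to\infty$.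
   Context: All norms are Euclidean norms, $A^*=A^\top$. Vectors $u\in\mathbb{R}^n$ are images: $n=pq$, pixel set $S=\{(i,j):1\le i\le p,1\le j\le q\}$, $u$ identified with $u:S\to\mathbb{R}$. Graph Laplacian built from $u$: fix $R>0$, $\sigma>0$, a distance $\eth$ on $S$; $g(a,b)=1$ if $0<\eth(a,b)\le R$, else $0$; $h_u(a,b)=\exp(-|u(a)-u(b)|^2/\sigma)$; $w_u=g\,h_u$; $W_u=[w_u(a,b)]$, $D_u=\mathrm{diag}(\sum_b w_u(a,b))$, $\Delta_u=D_u-W_u$. Exact-data iteration: for a map $\Psi:\mathbb{R}^m\to\mathbb{R}^n$, $u_0=\Psi(v)$, $u_{k+1}=u_k-\alpha_kA^*(Au_k-v)-\beta_k\Delta_{u_k}u_k$, where with constants $\eta_0,\eta_1,\nu_0,\nu_1,\nu_2>0$: $\alpha_k=\min\{\eta_0\|Au_k-v\|^2/\|A^*(Au_k-v)\|^2,\eta_1\}$ when $Au_k\ne v$ (when $Au_k=v$ the term $\alpha_kA^*(Au_k-v)$ vanishes); $\beta_k=\min\{\nu_0\|Au_k-v\|^2/\|\Delta_{u_k}u_k\|,\nu_1/\|\Delta_{u_k}u_k\|,\nu_2\}$ if $\Delta_{u_k}u_k\ne0$, else $\beta_k=0$. $\eta$ is a fixed constant with $0<\eta\le\min\{\eta_0/\|A\|^2,\eta_1\}$. *)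

theory Defs
  imports "HOL-Analysis.Analysis"
begin

definition is_distance :: "('a \<Rightarrow> 'a \<Rightarrow> real) \<Rightarrow> bool" where
  "is_distance d \<longleftrightarrow>
     (\<forall>a b. d a b \<ge> 0) \<and> (\<forall>a b. d a b = 0 \<longleftrightarrow> a = b) \<and>
     (\<forall>a b. d a b = d b a) \<and> (\<forall>a b c. d a c \<le> d a b + d b c)"

definition nbh_g :: "('a \<Rightarrow> 'a \<Rightarrow> real) \<Rightarrow> real \<Rightarrow> 'a \<Rightarrow> 'a \<Rightarrow> real" where
  "nbh_g eth R a b = (if 0 < eth a b \<and> eth a b \<le> R then 1 else 0)"

definition weight_h :: "real \<Rightarrow> real^'a \<Rightarrow> 'a \<Rightarrow> 'a \<Rightarrow> real" where
  "weight_h \<sigma> u a b = exp (- (\<bar>u $ a - u $ b\<bar>)\<^sup>2 / \<sigma>)"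

definition weight_w :: "('a \<Rightarrow> 'a \<Rightarrow> real) \<Rightarrow> real \<Rightarrow> real \<Rightarrow> real^'a \<Rightarrow> 'a \<Rightarrow> 'a \<Rightarrow> real" where
  "weight_w eth R \<sigma> u a b = nbh_g eth R a b * weight_h \<sigma> u a b"

definition W_mat :: "('a::finite \<Rightarrow> 'a \<Rightarrow> real) \<Rightarrow> real \<Rightarrow> real \<Rightarrow> real^'a \<Rightarrow> real^'a^'a" where
  "W_mat eth R \<sigma> u = (\<chi> a b. weight_w eth R \<sigma> u a b)"

definition D_mat :: "('a::finite \<Rightarrow> 'a \<Rightarrow> real) \<Rightarrow> real \<Rightarrow> real \<Rightarrow> real^'a \<Rightarrow> real^'a^'a" where
  "D_mat eth R \<sigma> u = (\<chi> a b. if a = b then (\<Sum>c\<in>UNIV. weight_w eth R \<sigma> u a c) else 0)"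

definition graph_laplacian :: "('a::finite \<Rightarrow> 'a \<Rightarrow> real) \<Rightarrow> real \<Rightarrow> real \<Rightarrow> real^'a \<Rightarrow> real^'a^'a" where
  "graph_laplacian eth R \<sigma> u = D_mat eth R \<sigma> u - W_mat eth R \<sigma> u"

definition irmgl_step ::
  "real^'n^'m \<Rightarrow> real^'m \<Rightarrow> real \<Rightarrow> real \<Rightarrow> real \<Rightarrow> real \<Rightarrow> real \<Rightarrow>
   ('n::finite \<Rightarrow> 'n \<Rightarrow> real) \<Rightarrow> real \<Rightarrow> real \<Rightarrow> real^'n \<Rightarrow> real^'n" where
  "irmgl_step A v \<eta>0 \<eta>1 \<nu>0 \<nu>1 \<nu>2 eth R \<sigma> u =
     (let r = A *v u - v;
          L = graph_laplacian eth R \<sigma> u *v u;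
          \<alpha> = (if r = 0 then 0
               else min (\<eta>0 * (norm r)\<^sup>2 / (norm (transpose A *v r))\<^sup>2) \<eta>1);
          \<beta> = (if L = 0 then 0
               else min (min (\<nu>0 * (norm r)\<^sup>2 / norm L) (\<nu>1 / norm L)) \<nu>2)
      in u - \<alpha> *\<^sub>R (transpose A *v r) - \<beta> *\<^sub>R L)"

definition irmgl_iter ::
  "real^'n^'m \<Rightarrow> (real^'m \<Rightarrow> real^'n) \<Rightarrow> real^'m \<Rightarrow> real \<Rightarrow> real \<Rightarrow> real \<Rightarrow> real \<Rightarrow> real \<Rightarrow>
   ('n::finite \<Rightarrow> 'n \<Rightarrow> real) \<Rightarrow> real \<Rightarrow> real \<Rightarrow> nat \<Rightarrow> real^'n" where
  "irmgl_iter A \<Psi> v \<eta>0 \<eta>1 \<nu>0 \<nu>1 \<nu>2 eth R \<sigma> k =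
     ((irmgl_step A v \<eta>0 \<eta>1 \<nu>0 \<nu>1 \<nu>2 eth R \<sigma>) ^^ k) (\<Psi> v)"

end

theory Submission
  imports Defs
begin
lemma inner_transp: fixes A :: "real^'n::finite^'m::finite"
  shows "inner x (transpose A *v y) = inner (A *v x) y"
  by (metis dot_lmul_matrix inner_commute transpose_matrix_vector)

lemma step_bound:
  fixes A :: "real^'n::finite^'m::finite" and udag u :: "real^'n" and v :: "real^'m"
  assumes params_pos: "\<eta>0 > 0" "\<eta>1 > 0" "\<nu>0 > 0" "\<nu>1 > 0" "\<nu>2 > 0"
    and eta_pos: "\<eta> > 0"
    and eta_le0: "\<eta> * (onorm (\<lambda>x. A *v x))\<^sup>2 \<le> \<eta>0"
    and eta_le1: "\<eta> \<le> \<eta>1"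
    and v_def: "v = A *v udag"
    and wp_pos: "rho > 0"
    and ue: "norm (u - udag) \<le> rho"
    and C0_pos: "\<eta> - \<nu>0 * (rho + \<nu>1) - \<eta>0 * \<eta>1 > 0"
  shows "(norm (irmgl_step A v \<eta>0 \<eta>1 \<nu>0 \<nu>1 \<nu>2 eth R \<sigma> u - udag))\<^sup>2 - (norm (u - udag))\<^sup>2
      \<le> - 2 * (\<eta> - \<nu>0 * (rho + \<nu>1) - \<eta>0 * \<eta>1) * (norm (A *v u - v))\<^sup>2"
proof -
  define r where "r = A *v u - v"
  define L where "L = graph_laplacian eth R \<sigma> u *v u"
  define g where "g = transpose A *v r"
  define \<alpha> where "\<alpha> = (if r = 0 then 0 else min (\<eta>0 * (norm r)\<^sup>2 / (norm g)\<^sup>2) \<eta>1)"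
  define \<beta> where "\<beta> = (if L = 0 then 0
               else min (min (\<nu>0 * (norm r)\<^sup>2 / norm L) (\<nu>1 / norm L)) \<nu>2)"
  define e where "e = u - udag"
  define w where "w = e - \<alpha> *\<^sub>R g"
  define K where "K = onorm (\<lambda>x. A *v x)"
  have step: "irmgl_step A v \<eta>0 \<eta>1 \<nu>0 \<nu>1 \<nu>2 eth R \<sigma> u - udag = w - \<beta> *\<^sub>R L"
    unfolding irmgl_step_def Let_def w_def e_def \<alpha>_def \<beta>_def g_def r_def L_def
    by (simp add: algebra_simps)
  have r_eq: "r = A *v e" unfolding r_def e_def v_def by (simp add: matrix_vector_mult_diff_distrib)
  have eg: "inner e g = (norm r)\<^sup>2"
  proof -
    have "inner e g = inner (A *v e) r" unfolding g_def by (rule inner_transp)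
    then show ?thesis by (simp add: r_eq power2_norm_eq_inner)
  qed
  have bl: "bounded_linear (\<lambda>x. A *v x)" by (rule matrix_vector_mul_bounded_linear)
  have gb: "norm g \<le> K * norm r"
  proof (cases "g = 0")
    case True then show ?thesis using onorm_pos_le[OF bl] by (simp add: K_def)
  next
    case False
    have "(norm g)\<^sup>2 = inner (A *v g) r" unfolding g_def
      by (metis inner_transp inner_commute power2_norm_eq_inner)
    also have "\<dots> \<le> norm (A *v g) * norm r" by (rule norm_cauchy_schwarz)
    also have "\<dots> \<le> K * norm g * norm r"
      using onorm[OF bl, of g] unfolding K_def by (simp add: mult_right_mono)
    finally have "norm g * norm g \<le> (K * norm r) * norm g" by (simp add: power2_eq_square algebra_simps)
    then show ?thesis using False by simp
  qed
  have K0: "K \<ge> 0" using onorm_pos_le[OF bl] by (simp add: K_def)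
  have a0: "0 \<le> \<alpha>" unfolding \<alpha>_def using params_pos by auto
  have a1: "\<alpha> \<le> \<eta>1" unfolding \<alpha>_def using params_pos by auto
  have a2: "\<alpha> * (norm g)\<^sup>2 \<le> \<eta>0 * (norm r)\<^sup>2"
  proof (cases "r = 0 \<or> g = 0")
    case True then show ?thesis unfolding \<alpha>_def using params_pos by auto
  next
    case False
    then have "\<alpha> \<le> \<eta>0 * (norm r)\<^sup>2 / (norm g)\<^sup>2" unfolding \<alpha>_def by auto
    then show ?thesis using False by (simp add: pos_le_divide_eq)
  qed
  have a3: "\<eta> * (norm r)\<^sup>2 \<le> \<alpha> * (norm r)\<^sup>2"
  proof (cases "r = 0")
    case True then show ?thesis by simp
  next
    case False
    have gn: "g \<noteq> 0" using eg False by auto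
    have "\<eta> * (norm g)\<^sup>2 \<le> \<eta> * (K * norm r)\<^sup>2"
      using gb eta_pos by (intro mult_left_mono power_mono) auto
    also have "\<dots> = (\<eta> * K\<^sup>2) * (norm r)\<^sup>2" by (simp add: power_mult_distrib)
    also have "\<dots> \<le> \<eta>0 * (norm r)\<^sup>2" using eta_le0 unfolding K_def by (intro mult_right_mono) auto
    finally have "\<eta> \<le> \<eta>0 * (norm r)\<^sup>2 / (norm g)\<^sup>2" using gn by (simp add: pos_le_divide_eq)
    then have "\<eta> \<le> \<alpha>" unfolding \<alpha>_def using False eta_le1 by auto
    then show ?thesis by (intro mult_right_mono) auto
  qed
  have wexp: "(norm w)\<^sup>2 = (norm e)\<^sup>2 - 2 * \<alpha> * (norm r)\<^sup>2 + \<alpha>\<^sup>2 * (norm g)\<^sup>2"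
  proof -
    have "inner w w = inner e e - 2 * \<alpha> * inner e g + \<alpha>\<^sup>2 * inner g g"
      unfolding w_def by (simp add: inner_diff_left inner_diff_right inner_commute algebra_simps power2_eq_square)
    then show ?thesis using eg by (simp only: power2_norm_eq_inner)
  qed
  have "\<alpha>\<^sup>2 * (norm g)\<^sup>2 = \<alpha> * (\<alpha> * (norm g)\<^sup>2)" by (simp add: power2_eq_square)
  also have "\<dots> \<le> \<alpha> * (\<eta>0 * (norm r)\<^sup>2)" using a2 a0 by (rule mult_left_mono)
  also have "\<dots> \<le> \<eta>1 * (\<eta>0 * (norm r)\<^sup>2)" using a1 params_pos by (intro mult_right_mono) auto
  finally have a4: "\<alpha>\<^sup>2 * (norm g)\<^sup>2 \<le> \<eta>1 * (\<eta>0 * (norm r)\<^sup>2)" .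
  have wb: "(norm w)\<^sup>2 \<le> (norm e)\<^sup>2 - 2 * \<eta> * (norm r)\<^sup>2 + \<eta>0 * \<eta>1 * (norm r)\<^sup>2"
    using wexp a3 a4 by (simp add: algebra_simps)
  have "\<eta>0 * \<eta>1 \<le> 2 * \<eta>"
  proof -
    have "0 \<le> \<nu>0 * (rho + \<nu>1)" using params_pos wp_pos by simp
    moreover have "0 \<le> \<eta>0 * \<eta>1" using params_pos by simp
    ultimately show ?thesis using C0_pos by linarith
  qed
  then have "\<eta>0 * \<eta>1 * (norm r)\<^sup>2 \<le> 2 * \<eta> * (norm r)\<^sup>2" by (intro mult_right_mono) auto
  then have "(norm w)\<^sup>2 \<le> (norm e)\<^sup>2" using wb by linarith
  also have "\<dots> \<le> rho\<^sup>2" using ue unfolding e_def by (intro power_mono) auto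
  finally have wr: "norm w \<le> rho" using wp_pos by (meson power2_le_imp_le less_imp_le)
  have b0: "0 \<le> \<beta>" unfolding \<beta>_def using params_pos by auto
  have b1: "\<beta> * norm L \<le> \<nu>0 * (norm r)\<^sup>2"
  proof (cases "L = 0")
    case True then show ?thesis unfolding \<beta>_def using params_pos by simp
  next
    case False
    then have "\<beta> \<le> \<nu>0 * (norm r)\<^sup>2 / norm L" unfolding \<beta>_def by simp
    then show ?thesis using False by (simp add: pos_le_divide_eq)
  qed
  have b2: "\<beta> * norm L \<le> \<nu>1"
  proof (cases "L = 0")
    case True then show ?thesis unfolding \<beta>_def using params_pos by simp
  next
    case False
    then have "\<beta> \<le> \<nu>1 / norm L" unfolding \<beta>_def by simp
    then show ?thesis using False by (simp add: pos_le_divide_eq)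
  qed
  have bL0: "0 \<le> \<beta> * norm L" using b0 by simp
  have fexp: "(norm (w - \<beta> *\<^sub>R L))\<^sup>2 = (norm w)\<^sup>2 - 2 * \<beta> * inner w L + (\<beta> * norm L)\<^sup>2"
  proof -
    have "inner (w - \<beta> *\<^sub>R L) (w - \<beta> *\<^sub>R L) = inner w w - 2 * \<beta> * inner w L + \<beta>\<^sup>2 * inner L L"
      by (simp add: inner_diff_left inner_diff_right inner_commute algebra_simps power2_eq_square)
    then show ?thesis by (simp only: power2_norm_eq_inner power_mult_distrib)
  qed
  have "- (2 * \<beta> * inner w L) \<le> 2 * (\<beta> * norm L) * norm w"
  proof -
    have "- inner w L \<le> norm w * norm L"
      by (metis Cauchy_Schwarz_ineq2 abs_le_iff mult.commute)
    then have "\<beta> * (- inner w L) \<le> \<beta> * (norm w * norm L)" using b0 by (rule mult_left_mono)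
    then show ?thesis by (simp add: algebra_simps)
  qed
  also have "\<dots> \<le> 2 * (\<nu>0 * (norm r)\<^sup>2) * rho"
  proof -
    have "(\<beta> * norm L) * norm w \<le> (\<nu>0 * (norm r)\<^sup>2) * rho"
      by (rule mult_mono[OF b1 wr]) (use params_pos in auto)
    then show ?thesis by simp
  qed
  finally have c1: "- (2 * \<beta> * inner w L) \<le> 2 * (\<nu>0 * (norm r)\<^sup>2) * rho" .
  have "(\<beta> * norm L)\<^sup>2 \<le> (\<nu>0 * (norm r)\<^sup>2) * \<nu>1"
    unfolding power2_eq_square[of "\<beta> * norm L"] by (rule mult_mono[OF b1 b2]) (use params_pos bL0 in auto)
  then have "(norm (w - \<beta> *\<^sub>R L))\<^sup>2 \<le> (norm e)\<^sup>2 + (- 2 * \<eta> + \<eta>0 * \<eta>1 + 2 * \<nu>0 * rho + \<nu>0 * \<nu>1) * (norm r)\<^sup>2"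
    using fexp c1 wb by (simp add: algebra_simps)
  also have "\<dots> \<le> (norm e)\<^sup>2 - 2 * (\<eta> - \<nu>0 * (rho + \<nu>1) - \<eta>0 * \<eta>1) * (norm r)\<^sup>2"
  proof -
    have "0 \<le> (\<nu>0 * \<nu>1 + \<eta>0 * \<eta>1) * (norm r)\<^sup>2" using params_pos by simp
    then show ?thesis by (simp add: algebra_simps)
  qed
  finally have "(norm (w - \<beta> *\<^sub>R L))\<^sup>2 - (norm e)\<^sup>2 \<le> - 2 * (\<eta> - \<nu>0 * (rho + \<nu>1) - \<eta>0 * \<eta>1) * (norm r)\<^sup>2" by linarith
  then show ?thesis unfolding step e_def r_def .
qed

theorem lemma3p8:
  fixes A :: "real^('p::finite \<times> 'q::finite)^'m::finite"
    and \<Psi> :: "real^'m \<Rightarrow> real^('p \<times> 'q)"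
    and udag :: "real^('p \<times> 'q)"
    and v :: "real^'m"
    and eth :: "'p \<times> 'q \<Rightarrow> 'p \<times> 'q \<Rightarrow> real"
    and R \<sigma> \<eta>0 \<eta>1 \<nu>0 \<nu>1 \<nu>2 \<eta> rho :: real
  defines "u \<equiv> irmgl_iter A \<Psi> v \<eta>0 \<eta>1 \<nu>0 \<nu>1 \<nu>2 eth R \<sigma>"
    and "C0 \<equiv> \<eta> - \<nu>0 * (rho + \<nu>1) - \<eta>0 * \<eta>1"
  assumes dist: "is_distance eth"
    and R_pos: "R > 0" and sigma_pos: "\<sigma> > 0"
    and params_pos: "\<eta>0 > 0" "\<eta>1 > 0" "\<nu>0 > 0" "\<nu>1 > 0" "\<nu>2 > 0"
    and eta_pos: "\<eta> > 0"
    and eta_le0: "\<eta> * (onorm (\<lambda>x. A *v x))\<^sup>2 \<le> \<eta>0"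
    and eta_le1: "\<eta> \<le> \<eta>1"
    and v_def: "v = A *v udag"
    and wp_pos: "rho > 0"
    and init: "norm (udag - \<Psi> v) \<le> rho"
    and C0_pos: "C0 > 0"
  shows "(\<forall>k. norm (u k - udag) \<le> rho)
    \<and> (\<forall>k. (norm (u (Suc k) - udag))\<^sup>2 - (norm (u k - udag))\<^sup>2
             \<le> - 2 * C0 * (norm (A *v u k - v))\<^sup>2)
    \<and> decseq (\<lambda>k. norm (u k - udag))
    \<and> summable (\<lambda>k. (norm (A *v u k - v))\<^sup>2)
    \<and> (\<Sum>k. (norm (A *v u k - v))\<^sup>2) \<le> (norm (u 0 - udag))\<^sup>2 / (2 * C0)
    \<and> (\<lambda>k. norm (A *v u k - v)) \<longlonglongrightarrow> 0"
proof -
  have us: "\<And>k. u (Suc k) = irmgl_step A v \<eta>0 \<eta>1 \<nu>0 \<nu>1 \<nu>2 eth R \<sigma> (u k)"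
    unfolding u_def irmgl_iter_def by simp
  have u0: "u 0 = \<Psi> v" unfolding u_def irmgl_iter_def by simp
  have C0': "\<eta> - \<nu>0 * (rho + \<nu>1) - \<eta>0 * \<eta>1 > 0" using C0_pos unfolding C0_def .
  have SB: "\<And>k. norm (u k - udag) \<le> rho \<Longrightarrow>
     (norm (u (Suc k) - udag))\<^sup>2 - (norm (u k - udag))\<^sup>2 \<le> - 2 * C0 * (norm (A *v u k - v))\<^sup>2"
    unfolding us C0_def
    by (rule step_bound[OF params_pos eta_pos eta_le0 eta_le1 v_def wp_pos _ C0'])
  have nn: "\<And>k. 0 \<le> 2 * C0 * (norm (A *v u k - v))\<^sup>2" using C0_pos by simp
  have B: "\<And>k. norm (u k - udag) \<le> rho"
  proof -
    fix k show "norm (u k - udag) \<le> rho"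
    proof (induction k)
      case 0 then show ?case using init u0 by (simp add: norm_minus_commute)
    next
      case (Suc k)
      have "(norm (u (Suc k) - udag))\<^sup>2 \<le> (norm (u k - udag))\<^sup>2" using SB[OF Suc] nn[of k] by linarith
      also have "\<dots> \<le> rho\<^sup>2" using Suc by (intro power_mono) auto
      finally show ?case using wp_pos by (meson power2_le_imp_le less_imp_le)
    qed
  qed
  have D: "\<And>k. (norm (u (Suc k) - udag))\<^sup>2 - (norm (u k - udag))\<^sup>2 \<le> - 2 * C0 * (norm (A *v u k - v))\<^sup>2"
    using SB B by blast
  have dec: "decseq (\<lambda>k. norm (u k - udag))"
    unfolding decseq_Suc_iff
  proof
    fix k
    have "(norm (u (Suc k) - udag))\<^sup>2 \<le> (norm (u k - udag))\<^sup>2" using D[of k] nn[of k] by linarith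
    then show "norm (u (Suc k) - udag) \<le> norm (u k - udag)" by (meson power2_le_imp_le norm_ge_zero)
  qed
  have ps: "\<And>n. 2 * C0 * (\<Sum>k<n. (norm (A *v u k - v))\<^sup>2) \<le> (norm (u 0 - udag))\<^sup>2 - (norm (u n - udag))\<^sup>2"
  proof -
    fix n show "2 * C0 * (\<Sum>k<n. (norm (A *v u k - v))\<^sup>2) \<le> (norm (u 0 - udag))\<^sup>2 - (norm (u n - udag))\<^sup>2"
    proof (induction n)
      case 0 then show ?case by simp
    next
      case (Suc n) then show ?case using D[of n] by (simp add: algebra_simps)
    qed
  qed
  have ps2: "\<And>n. (\<Sum>k<n. (norm (A *v u k - v))\<^sup>2) \<le> (norm (u 0 - udag))\<^sup>2 / (2 * C0)"
  proof -
    fix n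
    have "2 * C0 * (\<Sum>k<n. (norm (A *v u k - v))\<^sup>2) \<le> (norm (u 0 - udag))\<^sup>2"
      using ps[of n] by (smt (verit) zero_le_power2)
    then show "(\<Sum>k<n. (norm (A *v u k - v))\<^sup>2) \<le> (norm (u 0 - udag))\<^sup>2 / (2 * C0)"
      using C0_pos by (simp add: pos_le_divide_eq mult.commute)
  qed
  have sm: "summable (\<lambda>k. (norm (A *v u k - v))\<^sup>2)"
    by (rule summableI_nonneg_bounded[OF _ ps2]) simp
  have le: "(\<Sum>k. (norm (A *v u k - v))\<^sup>2) \<le> (norm (u 0 - udag))\<^sup>2 / (2 * C0)"
    by (rule suminf_le_const[OF sm ps2])
  have "(\<lambda>k. (norm (A *v u k - v))\<^sup>2) \<longlonglongrightarrow> 0" by (rule summable_LIMSEQ_zero[OF sm])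
  then have "(\<lambda>k. sqrt ((norm (A *v u k - v))\<^sup>2)) \<longlonglongrightarrow> sqrt 0" by (rule tendsto_real_sqrt)
  then have lim: "(\<lambda>k. norm (A *v u k - v)) \<longlonglongrightarrow> 0" by simp
  show ?thesis using B D dec sm le lim by blast
qed

end
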